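(* Let $A,B$ be abstract state spaces and let $\omega\in A\otimes_{\max}B$ be a state that is steering for its $B$-marginal $\omega^B$, where $\omega^B$ lies in the interior of $B_+$ (so that $\mathrm{Face}(\omega^B)=B_+$). If $\hat\omega:A^*\to B$ is injective, then $\hat\omega$ is an order-isomorphism. If moreover $B$ (and therefore $A$) is irreducible, then $\omega$ is pure in $A\otimes_{\max}B$, i.e., lies on an extremal ray of the positive cone of $A\otimes_{\max}B$.
   Context: An abstract state space is a pair $(A,u_A)$ where $A$ is a finite-dimensional real vector space with a closed, pointed, generating convex cone $A_+$, and $u_A$ is an interior point of the dual cone $A^*_+$. An observable on $A$ is a finite family of effects $a_i\in A^*_+$ with $\sum_i a_i=u_A$. $A\otimes_{\max}B$ is the space of bilinear forms on $A^*\times B^*$ nonnegative on $A^*_+\times B^*_+$; a state is such a form with $\omega(u_A,u_B)=1$; $\hat\omega:A^*\to B$ is $\hat\omega(a)(b)=\omega(a,b)$ and $\omega^B=\hat\omega(u_A)$. An ensemble for $\beta\in B_+$ is a finite family $\beta_i\in B_+$ with $\sum_i\beta_i=\beta$; $\omega$ is steering for its $B$-marginal if every ensemble $\{\beta_i\}$ for $\omega^B$ equals $\{\hat\omega(x_i)\}$ for some observable $\{x_i\}$ on $A$. $\mathrm{Face}(\beta)$ is the smallest face of $B_+$ containing $\beta$. An order-isomorphism is a linear bijection $\phi$ with $\phi(x)\ge0$ iff $x\ge0$. An ordered linear space is irreducible if it is not an ordered direct sum of two nonzero ordered subspaces. *)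

theory Defs
  imports "HOL-Analysis.Analysis"
begin

text \<open>Convention: a finite-dimensional real ordered vector space A is modelled by a
  Euclidean space type 'a together with its positive cone Ap :: 'a set.  The dual
  space A* is identified with 'a itself via the inner product pairing, so a functional
  f on A is represented by the vector f with f(x) = f \<bullet> x.\<close>

definition dual_cone :: "'a::euclidean_space set \<Rightarrow> 'a set" where
  "dual_cone C = {y. \<forall>x\<in>C. 0 \<le> y \<bullet> x}"

definition abstract_state_space :: "'a::euclidean_space set \<Rightarrow> 'a \<Rightarrow> bool" where
  "abstract_state_space C u \<longleftrightarrow>
     closed C \<and> convex_cone C \<and> C \<inter> uminus ` C = {0} \<and> span C = UNIV
     \<and> u \<in> interior (dual_cone C)"

definition observable :: "'a::euclidean_space set \<Rightarrow> 'a \<Rightarrow> nat \<Rightarrow> (nat \<Rightarrow> 'a) \<Rightarrow> bool" where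
  "observable C u n x \<longleftrightarrow> (\<forall>i<n. x i \<in> dual_cone C) \<and> (\<Sum>i<n. x i) = u"

definition max_tensor_cone ::
  "'a::euclidean_space set \<Rightarrow> 'b::euclidean_space set \<Rightarrow> ('a \<Rightarrow> 'b \<Rightarrow> real) set" where
  "max_tensor_cone CA CB = {\<omega>. bilinear \<omega> \<and>
      (\<forall>a\<in>dual_cone CA. \<forall>b\<in>dual_cone CB. 0 \<le> \<omega> a b)}"

definition max_tensor_state ::
  "'a::euclidean_space set \<Rightarrow> 'a \<Rightarrow> 'b::euclidean_space set \<Rightarrow> 'b \<Rightarrow> ('a \<Rightarrow> 'b \<Rightarrow> real) \<Rightarrow> bool" where
  "max_tensor_state CA uA CB uB \<omega> \<longleftrightarrow> \<omega> \<in> max_tensor_cone CA CB \<and> \<omega> uA uB = 1"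

text \<open>hat-omega : A* \<rightarrow> B, the unique element of B with (hat \<omega> a) \<bullet> b = \<omega> a b.\<close>
definition omega_hat :: "('a \<Rightarrow> 'b::euclidean_space \<Rightarrow> real) \<Rightarrow> 'a \<Rightarrow> 'b" where
  "omega_hat \<omega> a = (\<Sum>b\<in>Basis. \<omega> a b *\<^sub>R b)"

definition marginal_B :: "('a \<Rightarrow> 'b::euclidean_space \<Rightarrow> real) \<Rightarrow> 'a \<Rightarrow> 'b" where
  "marginal_B \<omega> uA = omega_hat \<omega> uA"

definition ensemble :: "'b::euclidean_space set \<Rightarrow> 'b \<Rightarrow> nat \<Rightarrow> (nat \<Rightarrow> 'b) \<Rightarrow> bool" where
  "ensemble CB \<beta> n \<beta>s \<longleftrightarrow> (\<forall>i<n. \<beta>s i \<in> CB) \<and> (\<Sum>i<n. \<beta>s i) = \<beta>"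

definition steering ::
  "'a::euclidean_space set \<Rightarrow> 'a \<Rightarrow> 'b::euclidean_space set \<Rightarrow> ('a \<Rightarrow> 'b \<Rightarrow> real) \<Rightarrow> bool" where
  "steering CA uA CB \<omega> \<longleftrightarrow>
     (\<forall>n \<beta>s. ensemble CB (marginal_B \<omega> uA) n \<beta>s \<longrightarrow>
        (\<exists>x. observable CA uA n x \<and> (\<forall>i<n. omega_hat \<omega> (x i) = \<beta>s i)))"

definition order_isomorphism :: "('a::real_vector \<Rightarrow> 'b::real_vector) \<Rightarrow> 'a set \<Rightarrow> 'b set \<Rightarrow> bool" where
  "order_isomorphism f P Q \<longleftrightarrow> linear f \<and> bij f \<and> (\<forall>x. f x \<in> Q \<longleftrightarrow> x \<in> P)"

definition irreducible_ordered :: "'a::real_vector set \<Rightarrow> bool" where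
  "irreducible_ordered C \<longleftrightarrow>
     \<not> (\<exists>V W. subspace V \<and> subspace W \<and> V \<noteq> {0} \<and> W \<noteq> {0} \<and> V \<inter> W = {0}
            \<and> (\<forall>z. \<exists>v\<in>V. \<exists>w\<in>W. z = v + w)
            \<and> C = {v + w | v w. v \<in> V \<inter> C \<and> w \<in> W \<inter> C})"

definition extremal_ray_form :: "('a \<Rightarrow> 'b \<Rightarrow> real) set \<Rightarrow> ('a \<Rightarrow> 'b \<Rightarrow> real) \<Rightarrow> bool" where
  "extremal_ray_form K \<omega> \<longleftrightarrow> \<omega> \<in> K \<and> \<omega> \<noteq> (\<lambda>a b. 0) \<and>
     (\<forall>\<sigma> \<tau>. \<sigma> \<in> K \<longrightarrow> \<tau> \<in> K \<longrightarrow> (\<forall>a b. \<omega> a b = \<sigma> a b + \<tau> a b)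
        \<longrightarrow> (\<exists>t\<ge>0. \<forall>a b. \<sigma> a b = t * \<omega> a b))"

end

theory Submission
  imports Defs
begin

lemma hat_inner:
  assumes "bilinear \<omega>"
  shows "omega_hat \<omega> a \<bullet> y = \<omega> a y"
proof -
  have lin: "linear (\<omega> a)" using assms unfolding bilinear_def by auto
  have "\<omega> a y = \<omega> a (\<Sum>b\<in>Basis. (y \<bullet> b) *\<^sub>R b)"
    by (simp add: euclidean_representation)
  also have "\<dots> = (\<Sum>b\<in>Basis. (y \<bullet> b) * \<omega> a b)"
    by (simp add: linear_sum[OF lin] linear_scale[OF lin])
  also have "\<dots> = omega_hat \<omega> a \<bullet> y"
    unfolding omega_hat_def inner_sum_left
    by (rule sum.cong) (auto simp: inner_commute)
  finally show ?thesis by simp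
qed

lemma hat_linear:
  assumes "bilinear \<omega>"
  shows "linear (omega_hat \<omega>)"
proof (rule linearI)
  fix x y show "omega_hat \<omega> (x + y) = omega_hat \<omega> x + omega_hat \<omega> y"
    by (simp add: omega_hat_def bilinear_ladd[OF assms] scaleR_add_left sum.distrib)
next
  fix c x show "omega_hat \<omega> (c *\<^sub>R x) = c *\<^sub>R omega_hat \<omega> x"
    by (simp add: omega_hat_def bilinear_lmul[OF assms] scaleR_sum_right)
qed

lemma bipolar:
  fixes C :: "'a::euclidean_space set"
  assumes "closed C" "convex_cone C" "\<forall>b\<in>dual_cone C. 0 \<le> b \<bullet> y"
  shows "y \<in> C"
proof (rule ccontr)
  assume "y \<notin> C"
  have cvx: "convex C" using assms(2) unfolding convex_cone_def by auto
  obtain a t where at: "a \<bullet> y < t" "\<forall>x\<in>C. t < a \<bullet> x"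
    using separating_hyperplane_closed_point[OF cvx assms(1) \<open>y \<notin> C\<close>] by blast
  have "0 \<in> C" using assms(2) by (simp add: convex_cone_iff)
  then have t0: "t < 0" using at by auto
  have "a \<in> dual_cone C"
    unfolding dual_cone_def
  proof (intro CollectI ballI)
    fix x assume x: "x \<in> C"
    show "0 \<le> a \<bullet> x"
    proof (rule ccontr)
      assume "\<not> 0 \<le> a \<bullet> x"
      then have neg: "a \<bullet> x < 0" by simp
      define c where "c = t / (a \<bullet> x) + 1"
      have c0: "c > 0" using neg t0 by (simp add: c_def divide_neg_neg add_pos_pos)
      have "c *\<^sub>R x \<in> C" using convex_cone_scaleR[OF assms(2)] c0 x by simp
      then have "t < a \<bullet> (c *\<^sub>R x)" using at by auto
      also have "a \<bullet> (c *\<^sub>R x) = t + a \<bullet> x"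
        using neg by (simp add: c_def algebra_simps)
      finally show False using neg by simp
    qed
  qed
  then have "0 \<le> a \<bullet> y" using assms(3) by auto
  then show False using at t0 by simp
qed

lemma hat_pos:
  fixes CB :: "'b::euclidean_space set"
  assumes "\<sigma> \<in> max_tensor_cone CA CB" "closed CB" "convex_cone CB" "a \<in> dual_cone CA"
  shows "omega_hat \<sigma> a \<in> CB"
proof (rule bipolar[OF assms(2,3)], intro ballI)
  fix b assume "b \<in> dual_cone CB"
  then show "0 \<le> b \<bullet> omega_hat \<sigma> a"
    using assms(1,4) hat_inner[of \<sigma> a b]
    by (simp add: max_tensor_cone_def inner_commute)
qed

lemma interior_dual_bound:
  fixes C :: "'a::euclidean_space set"
  assumes "u \<in> interior (dual_cone C)"
  shows "\<exists>\<epsilon>>0. \<forall>y\<in>C. \<epsilon> * norm y \<le> u \<bullet> y"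
proof -
  obtain e where e: "e > 0" "ball u e \<subseteq> dual_cone C"
    using assms mem_interior by blast
  have "e/2 * norm y \<le> u \<bullet> y" if y: "y \<in> C" for y
  proof (cases "y = 0")
    case True then show ?thesis by simp
  next
    case False
    define z where "z = u - (e/2 / norm y) *\<^sub>R y"
    have "dist u z = e/2" using False e by (simp add: z_def dist_norm)
    then have "z \<in> dual_cone C" using e by auto
    then have "0 \<le> z \<bullet> y" using y by (auto simp: dual_cone_def)
    also have "z \<bullet> y = u \<bullet> y - e/2 * norm y"
      using False by (simp add: z_def algebra_simps dot_square_norm power2_eq_square)
    finally show ?thesis by simp
  qed
  then show ?thesis using e by (intro exI[of _ "e/2"]) auto
qed

lemma rank_nullity_le:
  fixes g :: "'a::euclidean_space \<Rightarrow> 'a"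
  assumes "linear g"
  shows "dim {x. g x = 0} + dim (range g) \<le> DIM('a)"
proof -
  let ?K = "{x. g x = 0}"
  let ?U = "orthogonal_comp ?K"
  have sK: "subspace ?K" using assms by (rule linear_subspace_kernel)
  have sU: "subspace ?U" by (rule subspace_orthogonal_comp)
  have sum: "?K + ?U = UNIV" by (rule subspace_sum_orthogonal_comp[OF sK])
  have eq: "{x + y |x y. x \<in> ?K \<and> y \<in> ?U} = UNIV"
  proof (intro set_eqI iffI)
    fix x assume "x \<in> {x + y |x y. x \<in> ?K \<and> y \<in> ?U}" show "x \<in> UNIV" by simp
  next
    fix x :: 'a assume "x \<in> UNIV"
    have "x \<in> ?K + ?U" using sum by simp
    then obtain a b where "x = a + b" "a \<in> ?K" "b \<in> ?U" by (rule set_plus_elim)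
    then show "x \<in> {x + y |x y. x \<in> ?K \<and> y \<in> ?U}" by blast
  qed
  have "dim {x + y |x y. x \<in> ?K \<and> y \<in> ?U} + dim (?K \<inter> ?U) = dim ?K + dim ?U"
    by (rule dim_sums_Int[OF sK sU])
  then have d: "dim ?K + dim ?U = DIM('a)"
    using orthogonal_Int_0[OF sK] eq by simp
  have "range g \<subseteq> g ` ?U"
  proof
    fix z assume "z \<in> range g"
    then obtain x where x: "z = g x" by auto
    have "x \<in> ?K + ?U" using sum by simp
    then obtain k v where "x = k + v" "k \<in> ?K" "v \<in> ?U" by (rule set_plus_elim)
    then have "z = g v" using x linear_add[OF assms] by auto
    then show "z \<in> g ` ?U" using \<open>v \<in> ?U\<close> by auto
  qed
  then have "dim (range g) \<le> dim (g ` ?U)" by (rule dim_subset)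
  also have "\<dots> \<le> dim ?U" by (rule dim_image_le[OF assms])
  finally show ?thesis using d by simp
qed

lemma cone_sum_mem:
  assumes "convex_cone C" "finite F" "\<forall>e\<in>F. e \<in> C \<and> 0 \<le> a e"
  shows "(\<Sum>e\<in>F. a e *\<^sub>R e) \<in> C"
  using assms(2,3)
proof (induction F rule: finite_induct)
  case empty then show ?case using assms(1) by (simp add: convex_cone_iff)
next
  case (insert x F)
  then show ?case using assms(1) by (simp add: convex_cone_iff)
qed

lemma identity_extremal:
  fixes C :: "'a::euclidean_space set"
  assumes cl: "closed C" and cc: "convex_cone C" and sp: "span C = UNIV"
    and u: "u \<in> interior (dual_cone C)" and irr: "irreducible_ordered C"
    and lf: "linear f" and pos: "\<forall>x\<in>C. f x \<in> C \<and> x - f x \<in> C"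
  shows "\<exists>l\<ge>0. \<forall>x. f x = l *\<^sub>R x"
proof -
  obtain \<epsilon> where \<epsilon>: "\<epsilon> > 0" "\<forall>y\<in>C. \<epsilon> * norm y \<le> u \<bullet> y"
    using interior_dual_bound[OF u] by blast
  have ud: "\<forall>y\<in>C. 0 \<le> u \<bullet> y" using u interior_subset[of "dual_cone C"]
    by (auto simp: dual_cone_def)
  have upos: "0 < u \<bullet> y" if "y \<in> C" "y \<noteq> 0" for y
    using \<epsilon> that by (metis mult_pos_pos zero_less_norm_iff order_less_le_trans)
  define S where "S = {x\<in>C. u \<bullet> x = 1}"
  have cvxC: "convex C" using cc by (simp add: convex_cone_def)
  have SI: "S = C \<inter> {x. u \<bullet> x = 1}" by (auto simp: S_def)
  have "convex S" unfolding SI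
    using convex_Int[OF cvxC convex_hyperplane[of u 1]] by simp
  moreover have "compact S"
  proof -
    have "closed S" unfolding SI
      using closed_Int[OF cl closed_hyperplane[of u 1]] by simp
    moreover have "bounded S" unfolding bounded_iff
    proof (intro exI ballI)
      fix x assume "x \<in> S"
      then have "\<epsilon> * norm x \<le> 1" using \<epsilon> by (auto simp: S_def)
      then show "norm x \<le> 1/\<epsilon>" using \<epsilon> by (simp add: field_simps)
    qed
    ultimately show ?thesis by (simp add: compact_eq_bounded_closed)
  qed
  ultimately have KM: "S = convex hull {x. x extreme_point_of S}"
    by (rule Krein_Milman_Minkowski[rotated])
  define E where "E = {x. x extreme_point_of S}"
  have ES: "E \<subseteq> S" by (auto simp: E_def extreme_point_of_def)
  have rep: "\<exists>F a. finite F \<and> F \<subseteq> E \<and> (\<forall>e\<in>F. 0 \<le> a e) \<and> c = (\<Sum>e\<in>F. a e *\<^sub>R e)"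
    if c: "c \<in> C" for c
  proof (cases "c = 0")
    case True then show ?thesis by (intro exI[of _ "{}"]) auto
  next
    case False
    define r where "r = u \<bullet> c"
    have r: "r > 0" using upos c False by (simp add: r_def)
    have "(1/r) *\<^sub>R c \<in> S" using r c convex_cone_scaleR[OF cc, of "1/r" c]
      by (auto simp: S_def r_def)
    then have "(1/r) *\<^sub>R c \<in> convex hull E" using KM by (simp add: E_def)
    then obtain F w where F: "finite F" "F \<subseteq> E" "\<forall>x\<in>F. 0 \<le> w x"
      "(\<Sum>v\<in>F. w v *\<^sub>R v) = (1/r) *\<^sub>R c"
      unfolding convex_hull_explicit by blast
    have "c = r *\<^sub>R ((1/r) *\<^sub>R c)" using r by simp
    also have "\<dots> = (\<Sum>v\<in>F. (r * w v) *\<^sub>R v)"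
      by (simp add: F(4)[symmetric] scaleR_sum_right)
    finally show ?thesis using F r by (intro exI[of _ F] exI[of _ "\<lambda>v. r * w v"]) auto
  qed
  have eig: "f e = (u \<bullet> f e) *\<^sub>R e" if e: "e \<in> E" for e
  proof -
    have eS: "e \<in> S" using e ES by auto
    define p where "p = f e"
    define q where "q = e - p"
    have pC: "p \<in> C" and qC: "q \<in> C" using pos eS by (auto simp: S_def p_def q_def)
    have sum1: "u \<bullet> p + u \<bullet> q = 1" using eS by (simp add: S_def q_def inner_diff_right)
    show ?thesis
    proof (cases "p = 0")
      case True then show ?thesis by (simp add: p_def)
    next
      case pn: False
      show ?thesis
      proof (cases "q = 0")
        case True
        then have "p = e" by (simp add: q_def)
        then show ?thesis using eS by (simp add: p_def S_def)
      next
        case qn: False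
        define up where "up = u \<bullet> p"
        define uq where "uq = u \<bullet> q"
        have up: "up > 0" using upos pC pn by (simp add: up_def)
        have uq: "uq > 0" using upos qC qn by (simp add: uq_def)
        define a where "a = (1/up) *\<^sub>R p"
        define b where "b = (1/uq) *\<^sub>R q"
        have aS: "a \<in> S" using up pC convex_cone_scaleR[OF cc, of "1/up" p]
          by (auto simp: S_def a_def up_def)
        have bS: "b \<in> S" using uq qC convex_cone_scaleR[OF cc, of "1/uq" q]
          by (auto simp: S_def b_def uq_def)
        have h: "1 - uq = up" using sum1 by (simp add: up_def uq_def)
        have "(1 - uq) *\<^sub>R a + uq *\<^sub>R b = p + q"
          using up uq by (simp add: h a_def b_def)
        then have ecomb: "e = (1 - uq) *\<^sub>R a + uq *\<^sub>R b" by (simp add: q_def)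
        have "a = b"
        proof (rule ccontr)
          assume "a \<noteq> b"
          then have "e \<in> open_segment a b"
            unfolding in_segment using ecomb uq sum1 up
            by (intro conjI exI[of _ uq]) (auto simp: up_def uq_def)
          then show False using e aS bS by (auto simp: E_def extreme_point_of_def)
        qed
        then have "e = a" using ecomb by (simp add: algebra_simps)
        then have "p = up *\<^sub>R e" using up by (simp add: a_def)
        then show ?thesis by (simp add: p_def up_def)
      qed
    qed
  qed
  have CspE: "C \<subseteq> span E"
  proof
    fix c assume "c \<in> C"
    then obtain F a where FF: "finite F" "F \<subseteq> E" "c = (\<Sum>e\<in>F. a e *\<^sub>R e)" using rep by blast
    show "c \<in> span E" unfolding FF(3)
      by (intro span_sum span_scale span_base) (use FF in auto)
  qed
  then have spE: "span E = UNIV" using span_minimal[OF CspE subspace_span] sp by auto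
  have "E \<noteq> {}"
  proof
    assume "E = {}"
    then have "(UNIV :: 'a set) = {0}" using spE by simp
    moreover obtain b :: 'a where "b \<in> Basis" using nonempty_Basis by blast
    ultimately show False by (metis UNIV_I nonzero_Basis singletonD)
  qed
  then obtain e0 where e0: "e0 \<in> E" by blast
  define l where "l = u \<bullet> f e0"
  have e0S: "e0 \<in> S" using e0 ES by auto
  have l0: "l \<ge> 0" using ud pos e0S by (simp add: l_def S_def)
  show ?thesis
  proof (cases "\<forall>e\<in>E. u \<bullet> f e = l")
    case True
    have "f x = l *\<^sub>R x" for x
    proof (rule linear_eq_on[OF lf])
      show "linear (\<lambda>x. l *\<^sub>R x)" by (simp add: linear_scaleR)
      show "x \<in> span E" using spE by simp
      show "f b = l *\<^sub>R b" if "b \<in> E" for b using eig[OF that] True that by simp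
    qed
    then show ?thesis using l0 by blast
  next
    case False
    then obtain e1 where e1: "e1 \<in> E" "u \<bullet> f e1 \<noteq> l" by blast
    define g where "g x = f x - l *\<^sub>R x" for x
    have lg: "linear g" unfolding g_def
      by (intro linear_compose_sub lf) (simp add: linear_scaleR)
    define V where "V = {x. g x = 0}"
    define W where "W = range g"
    have sV: "subspace V" unfolding V_def by (rule linear_subspace_kernel[OF lg])
    have sW: "subspace W" unfolding W_def by (rule linear_subspace_image[OF lg subspace_UNIV])
    have inV: "e \<in> V" if "e \<in> E" "u \<bullet> f e = l" for e
      using eig[OF that(1)] that(2) by (simp add: V_def g_def)
    have inW: "e \<in> W" if "e \<in> E" "u \<bullet> f e \<noteq> l" for e
    proof -
      define m where "m = u \<bullet> f e"
      have "g ((1/(m - l)) *\<^sub>R e) = (1/(m - l)) *\<^sub>R g e" using linear_scale[OF lg] by simp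
      also have "g e = (m - l) *\<^sub>R e" using eig[OF that(1)] by (simp add: g_def m_def algebra_simps)
      finally have "g ((1/(m - l)) *\<^sub>R e) = e" using that(2) by (simp add: m_def)
      then show ?thesis unfolding W_def by (metis rangeI)
    qed
    have nz: "e \<noteq> 0" if "e \<in> E" for e using that ES by (auto simp: S_def)
    have Vn: "V \<noteq> {0}" using inV[OF e0] e0 nz l_def by auto
    have Wn: "W \<noteq> {0}" using inW[OF e1] e1 nz by auto
    define P where "P = {x + y |x y. x \<in> V \<and> y \<in> W}"
    have sP: "subspace P" unfolding P_def by (rule subspace_sums[OF sV sW])
    have "E \<subseteq> P"
    proof
      fix e assume e: "e \<in> E"
      show "e \<in> P"
      proof (cases "u \<bullet> f e = l")
        case True then show ?thesis using inV[OF e] subspace_0[OF sW] unfolding P_def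
          by (metis (mono_tags, lifting) add.right_neutral mem_Collect_eq)
      next
        case False then show ?thesis using inW[OF e] subspace_0[OF sV] unfolding P_def
          by (metis (mono_tags, lifting) add_0 mem_Collect_eq)
      qed
    qed
    then have "span E \<subseteq> P" using sP by (rule span_minimal)
    then have PU: "P = UNIV" using spE by auto
    have "dim P + dim (V \<inter> W) = dim V + dim W" unfolding P_def by (rule dim_sums_Int[OF sV sW])
    moreover have "dim V + dim W \<le> DIM('a)" unfolding V_def W_def by (rule rank_nullity_le[OF lg])
    moreover have "dim P = DIM('a)" using PU by simp
    ultimately have "dim (V \<inter> W) = 0" by linarith
    then have VW: "V \<inter> W = {0}" using subspace_0[OF sV] subspace_0[OF sW] by (auto simp: dim_eq_0)
    have decomp: "\<forall>z. \<exists>v\<in>V. \<exists>w\<in>W. z = v + w" using PU unfolding P_def by blast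
    have Ceq: "C = {v + w | v w. v \<in> V \<inter> C \<and> w \<in> W \<inter> C}"
    proof (intro subset_antisym subsetI)
      fix c assume "c \<in> {v + w | v w. v \<in> V \<inter> C \<and> w \<in> W \<inter> C}"
      then show "c \<in> C" using convex_cone_add[OF cc] by auto
    next
      fix c assume c: "c \<in> C"
      then obtain F a where F: "finite F" "F \<subseteq> E" "\<forall>e\<in>F. 0 \<le> a e" "c = (\<Sum>e\<in>F. a e *\<^sub>R e)"
        using rep by blast
      let ?L = "{e. u \<bullet> f e = l}"
      define v where "v = (\<Sum>e\<in>F \<inter> ?L. a e *\<^sub>R e)"
      define w where "w = (\<Sum>e\<in>F - ?L. a e *\<^sub>R e)"
      have "c = v + w" unfolding v_def w_def F(4) by (rule sum.Int_Diff[OF F(1)])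
      moreover have "v \<in> V" unfolding v_def
        using F inV by (intro subspace_sum[OF sV] subspace_scale[OF sV]) auto
      moreover have "w \<in> W" unfolding w_def
        using F inW by (intro subspace_sum[OF sW] subspace_scale[OF sW]) auto
      moreover have "v \<in> C" unfolding v_def
        using F ES by (intro cone_sum_mem[OF cc]) (auto simp: S_def)
      moreover have "w \<in> C" unfolding w_def
        using F ES by (intro cone_sum_mem[OF cc]) (auto simp: S_def)
      ultimately show "c \<in> {v + w | v w. v \<in> V \<inter> C \<and> w \<in> W \<inter> C}" by blast
    qed
    have False using irr unfolding irreducible_ordered_def
      apply (elim notE)
      apply (rule exI[of _ V], rule exI[of _ W])
      using sV sW Vn Wn VW decomp Ceq by blast
    then show ?thesis ..
  qed
qed

lemma dual_cone_scale:
  assumes "a \<in> dual_cone C" "0 \<le> c"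
  shows "c *\<^sub>R a \<in> dual_cone C"
  using assms by (auto simp: dual_cone_def)

lemma hat_add:
  assumes "\<forall>a b. \<omega> a b = \<sigma> a b + \<tau> a b"
  shows "omega_hat \<omega> a = omega_hat \<sigma> a + omega_hat \<tau> a"
  using assms by (simp add: omega_hat_def scaleR_add_left sum.distrib)

theorem corollary5p5:
  fixes CA :: "'a::euclidean_space set" and uA :: 'a
    and CB :: "'b::euclidean_space set" and uB :: 'b
    and \<omega> :: "'a \<Rightarrow> 'b \<Rightarrow> real"
  assumes "abstract_state_space CA uA" and "abstract_state_space CB uB"
    and "max_tensor_state CA uA CB uB \<omega>"
    and "steering CA uA CB \<omega>"
    and "marginal_B \<omega> uA \<in> interior CB"
    and "inj (omega_hat \<omega>)"
  shows "order_isomorphism (omega_hat \<omega>) (dual_cone CA) CB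
         \<and> (irreducible_ordered CB \<longrightarrow> extremal_ray_form (max_tensor_cone CA CB) \<omega>)"
proof -
  have clB: "closed CB" and ccB: "convex_cone CB" and spB: "span CB = UNIV"
    and uB: "uB \<in> interior (dual_cone CB)"
    using assms(2) by (auto simp: abstract_state_space_def)
  have K: "\<omega> \<in> max_tensor_cone CA CB" and one: "\<omega> uA uB = 1"
    using assms(3) by (auto simp: max_tensor_state_def)
  have bil: "bilinear \<omega>" using K by (simp add: max_tensor_cone_def)
  define h where "h = omega_hat \<omega>"
  have lh: "linear h" unfolding h_def by (rule hat_linear[OF bil])
  define m where "m = marginal_B \<omega> uA"
  have mh: "m = h uA" by (simp add: m_def h_def marginal_B_def)
  obtain e where e: "e > 0" "ball m e \<subseteq> CB" using assms(5) mem_interior m_def by metis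
  have pre: "\<exists>a\<in>dual_cone CA. h a = \<beta>" if \<beta>: "\<beta> \<in> CB" for \<beta>
  proof -
    define t where "t = e / (2 * (norm \<beta> + 1))"
    have tp: "2 * (norm \<beta> + 1) > 0" by (smt (verit) norm_ge_zero)
    then have t: "t > 0" unfolding t_def by (intro divide_pos_pos e(1))
    have "t * norm \<beta> < e"
    proof -
      have "t * norm \<beta> \<le> t * (norm \<beta> + 1)" using t by simp
      also have "\<dots> = e / 2" using tp by (simp add: t_def field_simps)
      finally show ?thesis using e by simp
    qed
    then have "m - t *\<^sub>R \<beta> \<in> ball m e" by (simp add: dist_norm t less_imp_le)
    then have m1: "m - t *\<^sub>R \<beta> \<in> CB" using e by auto
    have m0: "t *\<^sub>R \<beta> \<in> CB" using convex_cone_scaleR[OF ccB] t \<beta> by simp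
    define \<beta>s where "\<beta>s i = (if i = 0 then t *\<^sub>R \<beta> else m - t *\<^sub>R \<beta>)" for i :: nat
    have "ensemble CB (marginal_B \<omega> uA) 2 \<beta>s"
      unfolding ensemble_def m_def[symmetric]
      using m0 m1 by (auto simp: \<beta>s_def numeral_2_eq_2 lessThan_Suc less_Suc_eq)
    then obtain x where x: "observable CA uA 2 x" "\<forall>i<2. omega_hat \<omega> (x i) = \<beta>s i"
      using assms(4) unfolding steering_def by blast
    have x0: "x 0 \<in> dual_cone CA" using x(1) by (simp add: observable_def)
    have hx0: "h (x 0) = t *\<^sub>R \<beta>" using x(2) by (auto simp: h_def \<beta>s_def)
    have "h ((1/t) *\<^sub>R x 0) = \<beta>" using linear_scale[OF lh] hx0 t by simp
    moreover have "(1/t) *\<^sub>R x 0 \<in> dual_cone CA" using dual_cone_scale[OF x0] t by simp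
    ultimately show ?thesis by blast
  qed
  have surj: "surj h"
  proof -
    have "CB \<subseteq> range h" using pre by blast
    then have "span CB \<subseteq> range h"
      by (rule span_minimal) (rule linear_subspace_image[OF lh subspace_UNIV])
    then show ?thesis using spB by auto
  qed
  have inj: "inj h" using assms(6) h_def by simp
  have iff: "h x \<in> CB \<longleftrightarrow> x \<in> dual_cone CA" for x
  proof
    assume "h x \<in> CB"
    then obtain a where "a \<in> dual_cone CA" "h a = h x" using pre by blast
    then show "x \<in> dual_cone CA" using inj by (metis injD)
  next
    assume "x \<in> dual_cone CA"
    then show "h x \<in> CB" unfolding h_def by (rule hat_pos[OF K clB ccB])
  qed
  have OI: "order_isomorphism h (dual_cone CA) CB"
    unfolding order_isomorphism_def using lh inj surj iff by (simp add: bij_def)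
  have ER: "extremal_ray_form (max_tensor_cone CA CB) \<omega>" if irr: "irreducible_ordered CB"
    unfolding extremal_ray_form_def
  proof (intro conjI allI impI K)
    show "\<omega> \<noteq> (\<lambda>a b. 0)" using one by auto
  next
    fix \<sigma> \<tau> assume \<sigma>: "\<sigma> \<in> max_tensor_cone CA CB" and \<tau>: "\<tau> \<in> max_tensor_cone CA CB"
      and sum: "\<forall>a b. \<omega> a b = \<sigma> a b + \<tau> a b"
    have bs: "bilinear \<sigma>" using \<sigma> by (simp add: max_tensor_cone_def)
    obtain hi where hi: "linear hi" "hi \<circ> h = id"
      using linear_injective_left_inverse[OF lh inj] by blast
    have hih: "hi (h a) = a" for a using hi(2) by (metis comp_apply id_apply)
    have hhi: "h (hi x) = x" for x using surj hih by (metis surjD)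
    define f where "f x = omega_hat \<sigma> (hi x)" for x
    have lf: "linear f" unfolding f_def
      using linear_compose[OF hi(1) hat_linear[OF bs]] by (simp add: o_def)
    have pos: "\<forall>x\<in>CB. f x \<in> CB \<and> x - f x \<in> CB"
    proof
      fix x assume x: "x \<in> CB"
      then have a: "hi x \<in> dual_cone CA" using iff hhi by metis
      have "f x \<in> CB" unfolding f_def by (rule hat_pos[OF \<sigma> clB ccB a])
      moreover have "x - f x = omega_hat \<tau> (hi x)"
        using hat_add[OF sum, of "hi x"] hhi[of x] by (simp add: f_def h_def algebra_simps)
      moreover have "omega_hat \<tau> (hi x) \<in> CB" by (rule hat_pos[OF \<tau> clB ccB a])
      ultimately show "f x \<in> CB \<and> x - f x \<in> CB" by simp
    qed
    obtain l where l: "l \<ge> 0" "\<forall>x. f x = l *\<^sub>R x"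
      using identity_extremal[OF clB ccB spB uB irr lf pos] by blast
    show "\<exists>t\<ge>0. \<forall>a b. \<sigma> a b = t * \<omega> a b"
    proof (intro exI[of _ l] conjI allI)
      fix a b
      have "\<sigma> a b = omega_hat \<sigma> a \<bullet> b" by (simp add: hat_inner[OF bs])
      also have "omega_hat \<sigma> a = f (h a)" by (simp add: f_def hih)
      also have "\<dots> = l *\<^sub>R h a" using l by simp
      finally show "\<sigma> a b = l * \<omega> a b" by (simp add: h_def hat_inner[OF bil])
    qed (use l in simp)
  qed
  show ?thesis using OI ER by (simp add: h_def)
qed

end
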